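(* For every real $t>0$, $\varphi(1/t)=t^3\varphi(t)$. Moreover $\varphi(t)\to1$ as $t\to0^+$; more precisely, for $0<t\le 1/2$, $\varphi(t)=\frac{1}{135135\,t^{21}}\sum_{\varepsilon_1,\dots,\varepsilon_6\in\{\pm1\}}\varepsilon_1\cdots\varepsilon_6(1+\varepsilon_1t+\dots+\varepsilon_6t^6)^{13/2}$ and $\varphi(t)=1-\tfrac{1}{24}t^2+O(t^4)$.
   Context: For $t>0$ define \[\varphi(t)=\frac{1}{135135\;t^{21}}\sum_{\varepsilon_0,\dots,\varepsilon_6\in\{\pm1\}}\varepsilon_0\varepsilon_1\cdots\varepsilon_6\max\{\varepsilon_0+\varepsilon_1t+\dots+\varepsilon_6t^6,0\}^{13/2},\] where $135135=3\cdot5\cdot7\cdot9\cdot11\cdot13$. *)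

theory Defs
  imports "HOL-Analysis.Analysis" "HOL-Library.Landau_Symbols"
begin

text \<open>Sign vectors (eps 0, ..., eps 6) are functions nat => real with values in {-1,1}
  on {0..6} (and undefined elsewhere), i.e. elements of PiE {0..6} (%_. {-1,1}).\<close>

definition phi :: "real \<Rightarrow> real" where
  "phi t = (1 / (135135 * t ^ 21)) *
     (\<Sum>e\<in>PiE {0..6::nat} (\<lambda>_. {-1, 1::real}).
        (\<Prod>i\<in>{0..6}. e i) * (max (\<Sum>i\<in>{0..6}. e i * t ^ i) 0) powr (13/2))"

end

theory Submission
  imports Defs
begin


lemma peel:
  fixes g :: "real \<Rightarrow> real" and h :: "nat \<Rightarrow> real"
  shows "(\<Sum>e\<in>PiE {1..Suc n} (\<lambda>_. {-1,1::real}). (\<Prod>i\<in>{1..Suc n}. e i) * g (x + (\<Sum>i\<in>{1..Suc n}. e i * h i)))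
   = (\<Sum>e\<in>PiE {1..n} (\<lambda>_. {-1,1::real}). (\<Prod>i\<in>{1..n}. e i) *
        (g (x + (\<Sum>i\<in>{1..n}. e i * h i) + h (Suc n)) - g (x + (\<Sum>i\<in>{1..n}. e i * h i) - h (Suc n))))"
proof -
  have ins: "{1..Suc n} = insert (Suc n) {1..n}" by auto
  have nin: "Suc n \<notin> {1..n}" by simp
  let ?F = "\<lambda>e. (\<Prod>i\<in>{1..Suc n}. e i) * g (x + (\<Sum>i\<in>{1..Suc n}. e i * h i))"
  have "(\<Sum>e\<in>PiE {1..Suc n} (\<lambda>_. {-1,1::real}). ?F e)
      = (\<Sum>p\<in>{-1,1::real} \<times> PiE {1..n} (\<lambda>_. {-1,1::real}). ?F ((\<lambda>(y, g). g(Suc n := y)) p))"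
  proof -
    have E: "PiE {1..Suc n} (\<lambda>_. {-1,1::real}) = (\<lambda>(y, g). g(Suc n := y)) ` ({-1,1::real} \<times> PiE {1..n} (\<lambda>_. {-1,1::real}))"
      by (simp only: ins PiE_insert_eq)
    show ?thesis unfolding E by (subst sum.reindex[OF inj_combinator[OF nin]]) (simp only: o_def)
  qed
  also have "\<dots> = (\<Sum>y\<in>{-1,1::real}. \<Sum>f\<in>PiE {1..n} (\<lambda>_. {-1,1::real}). ?F (f(Suc n := y)))"
    by (subst sum.cartesian_product) (simp only: case_prod_unfold)
  also have "\<dots> = (\<Sum>f\<in>PiE {1..n} (\<lambda>_. {-1,1::real}). (\<Prod>i\<in>{1..n}. f i) *
        (g (x + (\<Sum>i\<in>{1..n}. f i * h i) + h (Suc n)) - g (x + (\<Sum>i\<in>{1..n}. f i * h i) - h (Suc n))))"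
  proof -
    have P: "(\<Prod>i\<in>{1..Suc n}. (f(Suc n := y)) i) = y * (\<Prod>i\<in>{1..n}. f i)" for f and y :: real
      unfolding ins using nin by (simp add: prod.insert)
    have S: "(\<Sum>i\<in>{1..Suc n}. (f(Suc n := y)) i * h i) = y * h (Suc n) + (\<Sum>i\<in>{1..n}. f i * h i)" for f and y :: real
      unfolding ins using nin by (simp add: sum.insert)
    show ?thesis
      by (simp add: P S sum.distrib[symmetric] sum_subtractf[symmetric] algebra_simps)
  qed
  finally show ?thesis .
qed

lemma mvt_bound:
  fixes f f' :: "real \<Rightarrow> real"
  assumes "u \<le> v" "\<And>y. u \<le> y \<Longrightarrow> y \<le> v \<Longrightarrow> (f has_real_derivative f' y) (at y)"
    "\<And>y. u \<le> y \<Longrightarrow> y \<le> v \<Longrightarrow> \<bar>f' y\<bar> \<le> M"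
  shows "\<bar>f v - f u\<bar> \<le> (v - u) * M"
proof (cases "u = v")
  case True then show ?thesis by simp
next
  case False
  with assms(1) have "u < v" by simp
  from MVT2[OF this assms(2)] obtain z where z: "u < z" "z < v" "f v - f u = (v - u) * f' z" by blast
  have "\<bar>f' z\<bar> \<le> M" using assms(3) z by simp
  then show ?thesis using z \<open>u < v\<close> by (simp add: abs_mult mult_left_mono)
qed

lemma diff_bound:
  fixes G :: "nat \<Rightarrow> real \<Rightarrow> real" and h :: "nat \<Rightarrow> real"
  assumes "\<forall>i\<in>{1..n}. h i \<ge> 0"
    and "\<forall>k<n. \<forall>y. a \<le> y \<and> y \<le> b \<longrightarrow> (G k has_real_derivative G (Suc k) y) (at y)"
    and "\<forall>y. a \<le> y \<and> y \<le> b \<longrightarrow> \<bar>G n y\<bar> \<le> M"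
    and "a \<le> x - (\<Sum>i\<in>{1..n}. h i)" "x + (\<Sum>i\<in>{1..n}. h i) \<le> b"
  shows "\<bar>\<Sum>e\<in>PiE {1..n} (\<lambda>_. {-1,1::real}). (\<Prod>i\<in>{1..n}. e i) * G 0 (x + (\<Sum>i\<in>{1..n}. e i * h i))\<bar>
          \<le> (\<Prod>i\<in>{1..n}. 2 * h i) * M"
  using assms
proof (induction n arbitrary: G a b M x)
  case 0
  then show ?case by simp
next
  case (Suc n)
  define H where "H = h (Suc n)"
  have H0: "H \<ge> 0" using Suc.prems(1) by (simp add: H_def)
  define G' where "G' k y = G k (y + H) - G k (y - H)" for k y
  have sumS: "(\<Sum>i\<in>{1..Suc n}. h i) = (\<Sum>i\<in>{1..n}. h i) + H" by (simp add: H_def)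
  have sum0: "(\<Sum>i\<in>{1..n}. h i) \<ge> 0" using Suc.prems(1) by (intro sum_nonneg) auto
  have IH: "\<bar>\<Sum>e\<in>PiE {1..n} (\<lambda>_. {-1,1::real}). (\<Prod>i\<in>{1..n}. e i) * G' 0 (x + (\<Sum>i\<in>{1..n}. e i * h i))\<bar>
          \<le> (\<Prod>i\<in>{1..n}. 2 * h i) * (2 * H * M)"
  proof (rule Suc.IH[where G=G' and a="a + H" and b="b - H"])
    show "\<forall>i\<in>{1..n}. 0 \<le> h i" using Suc.prems(1) by auto
    show "\<forall>k<n. \<forall>y. a + H \<le> y \<and> y \<le> b - H \<longrightarrow> (G' k has_real_derivative G' (Suc k) y) (at y)"
    proof (intro allI impI)
      fix k y assume k: "k < n" and y: "a + H \<le> y \<and> y \<le> b - H"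
      have d1: "(G k has_real_derivative G (Suc k) (y + H)) (at (y + H))"
        using Suc.prems(2) k y H0 by auto
      have d2: "(G k has_real_derivative G (Suc k) (y + - H)) (at (y + - H))"
        using Suc.prems(2) k y H0 by auto
      have "((\<lambda>y. G k (y + H) - G k (y + - H)) has_real_derivative G (Suc k) (y + H) - G (Suc k) (y + - H)) (at y)"
        using DERIV_shift[THEN iffD1, OF d1] DERIV_shift[THEN iffD1, OF d2] by (rule DERIV_diff)
      then show "(G' k has_real_derivative G' (Suc k) y) (at y)"
        unfolding G'_def[abs_def] by simp
    qed
    show "\<forall>y. a + H \<le> y \<and> y \<le> b - H \<longrightarrow> \<bar>G' n y\<bar> \<le> 2 * H * M"
    proof (intro allI impI)
      fix y assume y: "a + H \<le> y \<and> y \<le> b - H"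
      have "\<bar>G n (y + H) - G n (y - H)\<bar> \<le> ((y + H) - (y - H)) * M"
        by (rule mvt_bound[where f'="G (Suc n)"]) (use H0 y Suc.prems(2,3) in auto)
      then show "\<bar>G' n y\<bar> \<le> 2 * H * M" by (simp add: G'_def)
    qed
    show "a + H \<le> x - (\<Sum>i\<in>{1..n}. h i)" using Suc.prems(4) sumS by simp
    show "x + (\<Sum>i\<in>{1..n}. h i) \<le> b - H" using Suc.prems(5) sumS by simp
  qed
  have P: "(\<Prod>i\<in>{1..Suc n}. 2 * h i) = (\<Prod>i\<in>{1..n}. 2 * h i) * (2 * H)" by (simp add: H_def)
  show ?case
    unfolding peel using IH by (simp add: G'_def H_def P mult.assoc)
qed



definition dpw :: "nat \<Rightarrow> real \<Rightarrow> real" where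
  "dpw k y = (\<Prod>j<k. (13/2 - real j)) * (1 + y) powr (13/2 - real k)"
definition dpow :: "nat \<Rightarrow> nat \<Rightarrow> real \<Rightarrow> real" where
  "dpow m k y = (\<Prod>j<k. (real m - real j)) * y ^ (m - k)"
definition Rd :: "nat \<Rightarrow> real \<Rightarrow> real" where
  "Rd k y = dpw k y - (135135 / 61931520) * (1344 * dpow 6 k y + 96 * dpow 7 k y - 6 * dpow 8 k y + dpow 9 k y)"

lemma dpw_deriv: "1 + y > 0 \<Longrightarrow> (dpw k has_real_derivative dpw (Suc k) y) (at y)"
proof -
  assume y: "1 + y > 0"
  have "((\<lambda>y. (1 + y) powr (13/2 - real k)) has_real_derivative (13/2 - real k) * (1 + y) powr (13/2 - real k - of_nat 1) * 1) (at y)"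
    by (rule DERIV_fun_powr) (auto intro!: derivative_eq_intros simp: y)
  then have "(dpw k has_real_derivative (\<Prod>j<k. (13/2 - real j)) * ((13/2 - real k) * (1 + y) powr (13/2 - real k - of_nat 1) * 1)) (at y)"
    unfolding dpw_def[abs_def] by (rule DERIV_cmult)
  then show ?thesis by (simp add: dpw_def algebra_simps)
qed

lemma dpow_deriv: fixes y :: real shows "k < m \<Longrightarrow> (dpow m k has_real_derivative dpow m (Suc k) y) (at y)"
proof -
  assume k: "k < m"
  have "((\<lambda>y. y ^ (m - k)) has_real_derivative real (m - k) * y ^ (m - k - 1)) (at y)"
    using DERIV_pow[of "m - k" y UNIV] by simp
  then have "(dpow m k has_real_derivative (\<Prod>j<k. (real m - real j)) * (real (m - k) * y ^ (m - k - 1))) (at y)"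
    unfolding dpow_def[abs_def] by (rule DERIV_cmult)
  moreover have "m - k - 1 = m - Suc k" by simp
  moreover have "real (m - k) = real m - real k" using k by simp
  ultimately show ?thesis by (simp add: dpow_def algebra_simps)
qed

lemma Rd_deriv: "k < 6 \<Longrightarrow> 1 + y > 0 \<Longrightarrow> (Rd k has_real_derivative Rd (Suc k) y) (at y)"
  unfolding Rd_def[abs_def]
  by (intro DERIV_diff DERIV_cmult DERIV_add dpw_deriv dpow_deriv) auto

lemma Rd6: "Rd 6 y = (135135/64) * ((1 + y) powr (1/2) - (1 + y/2 - y^2/8 + y^3/16))"
  by (simp add: Rd_def dpw_def dpow_def eval_nat_numeral prod.lessThan_Suc algebra_simps)

lemma Rd0: "Rd 0 y = (1 + y) powr (13/2) - (135135 / 61931520) * (1344 * y ^ 6 + 96 * y ^ 7 - 6 * y ^ 8 + 1 * y ^ 9)"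
  by (simp add: Rd_def dpw_def dpow_def)

lemma sqrt_err: fixes y :: real assumes "\<bar>y\<bar> \<le> 1/2" shows "\<bar>(1 + y) powr (1/2) - (1 + y/2 - y^2/8 + y^3/16)\<bar> \<le> y ^ 4"
proof -
  define s where "s = sqrt (1 + y)"
  have s0: "s \<ge> 0" and ss: "s^2 = 1 + y" using assms by (auto simp: s_def)
  have pw: "(1 + y) powr (1/2) = s" using assms by (simp add: s_def powr_half_sqrt)
  have yy: "y = s^2 - 1" using ss by simp
  have e: "s - (1 + y/2 - y^2/8 + y^3/16) = - ((s - 1)^4 * (s^2 + 4 * s + 5) / 16)"
    unfolding yy by (simp add: field_simps) algebra
  have q: "(s^2 + 4 * s + 5) / 16 \<le> (s + 1)^4"
  proof -
    have "(s + 1)^4 = 1 + 4 * s + 6 * s^2 + 4 * s^3 + s^4" by algebra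
    moreover have "s^3 \<ge> 0" "s^4 \<ge> 0" "s^2 \<ge> 0" using s0 by auto
    ultimately show ?thesis using s0 by simp
  qed
  have "\<bar>s - (1 + y/2 - y^2/8 + y^3/16)\<bar> = (s - 1)^4 * ((s^2 + 4 * s + 5) / 16)"
    unfolding e using s0 by (simp add: abs_mult)
  also have "\<dots> \<le> (s - 1)^4 * (s + 1)^4" by (rule mult_left_mono[OF q]) simp
  also have "\<dots> = y^4" unfolding yy by algebra
  finally show ?thesis using pw by simp
qed

definition "PP0 (t::real) (y::real) = (1344 * y ^ 6 + 96 * y ^ 7 - 6 * y ^ 8 + 1 * y ^ 9)"

definition "PP1 (t::real) (y::real) = (192 * t ^ 42 + 2 * t ^ 54 + 16128 * y ^ 1 * t ^ 30 - 96 * y ^ 1 * t ^ 42 + 4032 * y ^ 2 * t ^ 30 + 72 * y ^ 2 * t ^ 42 + 53760 * y ^ 3 * t ^ 18 - 672 * y ^ 3 * t ^ 30 + 6720 * y ^ 4 * t ^ 18 + 252 * y ^ 4 * t ^ 30 + 16128 * y ^ 5 * t ^ 6 - 672 * y ^ 5 * t ^ 18 + 1344 * y ^ 6 * t ^ 6 + 168 * y ^ 6 * t ^ 18 - 96 * y ^ 7 * t ^ 6 + 18 * y ^ 8 * t ^ 6)"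

definition "PP2 (t::real) (y::real) = (32256 * t ^ 31 + 107520 * t ^ 33 + 32256 * t ^ 35 - 192 * t ^ 41 - 1344 * t ^ 43 - 1344 * t ^ 45 - 192 * t ^ 47 + 16128 * y ^ 1 * t ^ 31 + 53760 * y ^ 1 * t ^ 33 + 16128 * y ^ 1 * t ^ 35 + 288 * y ^ 1 * t ^ 41 + 2016 * y ^ 1 * t ^ 43 + 2016 * y ^ 1 * t ^ 45 + 288 * y ^ 1 * t ^ 47 + 322560 * y ^ 2 * t ^ 21 + 322560 * y ^ 2 * t ^ 23 - 4032 * y ^ 2 * t ^ 31 - 13440 * y ^ 2 * t ^ 33 - 4032 * y ^ 2 * t ^ 35 + 53760 * y ^ 3 * t ^ 21 + 53760 * y ^ 3 * t ^ 23 + 2016 * y ^ 3 * t ^ 31 + 6720 * y ^ 3 * t ^ 33 + 2016 * y ^ 3 * t ^ 35 + 161280 * y ^ 4 * t ^ 11 - 6720 * y ^ 4 * t ^ 21 - 6720 * y ^ 4 * t ^ 23 + 16128 * y ^ 5 * t ^ 11 + 2016 * y ^ 5 * t ^ 21 + 2016 * y ^ 5 * t ^ 23 - 1344 * y ^ 6 * t ^ 11 + 288 * y ^ 7 * t ^ 11)"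

definition "PP3 (t::real) (y::real) = (32256 * t ^ 31 + 107520 * t ^ 33 + 139776 * t ^ 35 + 107520 * t ^ 37 + 32832 * t ^ 39 + 4032 * t ^ 41 + 8064 * t ^ 43 + 14016 * t ^ 45 + 8064 * t ^ 47 + 4032 * t ^ 49 + 576 * t ^ 51 + 1290240 * y ^ 1 * t ^ 23 + 1290240 * y ^ 1 * t ^ 25 + 1290240 * y ^ 1 * t ^ 27 - 16128 * y ^ 1 * t ^ 31 - 53760 * y ^ 1 * t ^ 33 - 69888 * y ^ 1 * t ^ 35 - 53760 * y ^ 1 * t ^ 37 - 16128 * y ^ 1 * t ^ 39 + 322560 * y ^ 2 * t ^ 23 + 322560 * y ^ 2 * t ^ 25 + 322560 * y ^ 2 * t ^ 27 + 12096 * y ^ 2 * t ^ 31 + 40320 * y ^ 2 * t ^ 33 + 52416 * y ^ 2 * t ^ 35 + 40320 * y ^ 2 * t ^ 37 + 12096 * y ^ 2 * t ^ 39 + 1290240 * y ^ 3 * t ^ 15 - 53760 * y ^ 3 * t ^ 23 - 53760 * y ^ 3 * t ^ 25 - 53760 * y ^ 3 * t ^ 27 + 161280 * y ^ 4 * t ^ 15 + 20160 * y ^ 4 * t ^ 23 + 20160 * y ^ 4 * t ^ 25 + 20160 * y ^ 4 * t ^ 27 - 16128 * y ^ 5 * t ^ 15 + 4032 * y ^ 6 * t ^ 15)"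

definition "PP4 (t::real) (y::real) = (2580480 * t ^ 24 + 2580480 * t ^ 26 + 2580480 * t ^ 28 + 2548224 * t ^ 30 - 107520 * t ^ 32 - 139776 * t ^ 34 - 215040 * t ^ 36 - 139776 * t ^ 38 - 107520 * t ^ 40 - 32256 * t ^ 42 + 1290240 * y ^ 1 * t ^ 24 + 1290240 * y ^ 1 * t ^ 26 + 1290240 * y ^ 1 * t ^ 28 + 1338624 * y ^ 1 * t ^ 30 + 161280 * y ^ 1 * t ^ 32 + 209664 * y ^ 1 * t ^ 34 + 322560 * y ^ 1 * t ^ 36 + 209664 * y ^ 1 * t ^ 38 + 161280 * y ^ 1 * t ^ 40 + 48384 * y ^ 1 * t ^ 42 + 7741440 * y ^ 2 * t ^ 18 - 322560 * y ^ 2 * t ^ 24 - 322560 * y ^ 2 * t ^ 26 - 322560 * y ^ 2 * t ^ 28 - 322560 * y ^ 2 * t ^ 30 + 1290240 * y ^ 3 * t ^ 18 + 161280 * y ^ 3 * t ^ 24 + 161280 * y ^ 3 * t ^ 26 + 161280 * y ^ 3 * t ^ 28 + 161280 * y ^ 3 * t ^ 30 - 161280 * y ^ 4 * t ^ 18 + 48384 * y ^ 5 * t ^ 18)"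

definition "PP5 (t::real) (y::real) = (2580480 * t ^ 24 + 2580480 * t ^ 26 + 2677248 * t ^ 28 + 2903040 * t ^ 30 + 2999808 * t ^ 32 + 645120 * t ^ 34 + 741888 * t ^ 36 + 645120 * t ^ 38 + 419328 * t ^ 40 + 322560 * t ^ 42 + 96768 * t ^ 44 + 30965760 * y ^ 1 * t ^ 20 - 1290240 * y ^ 1 * t ^ 24 - 1290240 * y ^ 1 * t ^ 26 - 1290240 * y ^ 1 * t ^ 28 - 1290240 * y ^ 1 * t ^ 30 - 1290240 * y ^ 1 * t ^ 32 + 7741440 * y ^ 2 * t ^ 20 + 967680 * y ^ 2 * t ^ 24 + 967680 * y ^ 2 * t ^ 26 + 967680 * y ^ 2 * t ^ 28 + 967680 * y ^ 2 * t ^ 30 + 967680 * y ^ 2 * t ^ 32 - 1290240 * y ^ 3 * t ^ 20 + 483840 * y ^ 4 * t ^ 20)"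

definition "PP6 (t::real) (y::real) = (61931520 * t ^ 21 - 2580480 * t ^ 23 - 2580480 * t ^ 25 - 2580480 * t ^ 27 - 2580480 * t ^ 29 - 2580480 * t ^ 31 - 2580480 * t ^ 33 + 30965760 * y ^ 1 * t ^ 21 + 3870720 * y ^ 1 * t ^ 23 + 3870720 * y ^ 1 * t ^ 25 + 3870720 * y ^ 1 * t ^ 27 + 3870720 * y ^ 1 * t ^ 29 + 3870720 * y ^ 1 * t ^ 31 + 3870720 * y ^ 1 * t ^ 33 - 7741440 * y ^ 2 * t ^ 21 + 3870720 * y ^ 3 * t ^ 21)"

lemma stage0: "PP0 t (y + t ^ 6) - PP0 t (y - t ^ 6) = PP1 t y"
  unfolding PP0_def PP1_def by algebra

lemma stage1: "PP1 t (y + t ^ 5) - PP1 t (y - t ^ 5) = PP2 t y"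
  unfolding PP1_def PP2_def by algebra

lemma stage2: "PP2 t (y + t ^ 4) - PP2 t (y - t ^ 4) = PP3 t y"
  unfolding PP2_def PP3_def by algebra

lemma stage3: "PP3 t (y + t ^ 3) - PP3 t (y - t ^ 3) = PP4 t y"
  unfolding PP3_def PP4_def by algebra

lemma stage4: "PP4 t (y + t ^ 2) - PP4 t (y - t ^ 2) = PP5 t y"
  unfolding PP4_def PP5_def by algebra

lemma stage5: "PP5 t (y + t ^ 1) - PP5 t (y - t ^ 1) = PP6 t y"
  unfolding PP5_def PP6_def by algebra

definition L :: "(nat \<Rightarrow> real) \<Rightarrow> nat \<Rightarrow> (real \<Rightarrow> real) \<Rightarrow> real \<Rightarrow> real" where
  "L h n g x = (\<Sum>e\<in>PiE {1..n} (\<lambda>_. {-1,1::real}). (\<Prod>i\<in>{1..n}. e i) * g (x + (\<Sum>i\<in>{1..n}. e i * h i)))"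

lemma peelL: "L h (Suc n) g x = L h n (\<lambda>y. g (y + h (Suc n)) - g (y - h (Suc n))) x"
  unfolding L_def by (rule peel)

lemma L0: "L h 0 g x = g x"
  by (simp add: L_def)

lemma L_lin: "L h n (\<lambda>y. f y + c * g y) x = L h n f x + c * L h n g x"
  unfolding L_def by (simp add: algebra_simps sum.distrib sum_distrib_left)

lemma L_PP: "L (\<lambda>i. t ^ i) 6 (PP0 t) 0 = PP6 t 0"
proof -
  let ?h = "\<lambda>i::nat. t ^ i"
  have "L ?h 6 (PP0 t) 0 = L ?h 5 (PP1 t) 0"
    using peelL[of ?h 5 "PP0 t" 0] stage0 by simp
  also have "\<dots> = L ?h 4 (PP2 t) 0"
    using peelL[of ?h 4 "PP1 t" 0] stage1 by simp
  also have "\<dots> = L ?h 3 (PP3 t) 0"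
    using peelL[of ?h 3 "PP2 t" 0] stage2 by simp
  also have "\<dots> = L ?h 2 (PP4 t) 0"
    using peelL[of ?h 2 "PP3 t" 0] stage3 by simp
  also have "\<dots> = L ?h 1 (PP5 t) 0"
    using peelL[of ?h 1 "PP4 t" 0] stage4 by (simp add: numeral_2_eq_2)
  also have "\<dots> = L ?h 0 (PP6 t) 0"
    using peelL[of ?h 0 "PP5 t" 0] stage5[simplified] by simp
  finally show ?thesis by (simp add: L0)
qed

lemma sum16: "(\<Sum>i\<in>{1..6::nat}. f i) = f 1 + f 2 + f 3 + f 4 + f 5 + (f 6 :: real)"
proof -
  have "{1..6::nat} = {1,2,3,4,5,6}" by auto
  then show ?thesis by simp
qed

lemma prod16: "(\<Prod>i\<in>{1..6::nat}. f i) = f 1 * f 2 * f 3 * f 4 * f 5 * (f 6 :: real)"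
proof -
  have "{1..6::nat} = {1,2,3,4,5,6}" by auto
  then show ?thesis by (simp add: mult.assoc)
qed


lemma sigma_bound: fixes t :: real assumes "0 < t" "t \<le> 1/4"
  shows "(\<Sum>i\<in>{1..6::nat}. t ^ i) \<le> 3/2 * t"
proof -
  have t1: "t \<le> 1" using assms by simp
  have a: "t ^ 2 \<le> t / 4" using assms by (simp add: power2_eq_square)
  have b: "t ^ 3 \<le> t / 16"
  proof -
    have "t ^ 3 = t * (t * t)" by (simp add: power3_eq_cube)
    also have "\<dots> \<le> t * (1/4 * (1/4))" using assms by (intro mult_left_mono mult_mono) auto
    finally show ?thesis by simp
  qed
  have c: "t ^ k \<le> t ^ 3" if "3 \<le> k" for k by (rule power_decreasing[OF that]) (use assms in auto)
  show ?thesis unfolding sum16 using a b c[of 4] c[of 5] c[of 6] by simp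
qed

lemma sigma_half: fixes t :: real assumes "0 < t" "t \<le> 1/2"
  shows "(\<Sum>i\<in>{1..6::nat}. t ^ i) < 1"
proof -
  have c: "t ^ k \<le> (1/2) ^ k" for k using power_mono[of t "1/2" k] assms by simp
  show ?thesis unfolding sum16 using c[of 1] c[of 2] c[of 3] c[of 4] c[of 5] c[of 6] by (simp add: power_divide; linarith)
qed

lemma abs_sum_sign: fixes h :: "nat \<Rightarrow> real"
  assumes "e \<in> PiE {1..n} (\<lambda>_. {-1,1::real})" "\<forall>i\<in>{1..n}. h i \<ge> 0"
  shows "\<bar>\<Sum>i\<in>{1..n}. e i * h i\<bar> \<le> (\<Sum>i\<in>{1..n}. h i)"
proof -
  have "\<bar>\<Sum>i\<in>{1..n}. e i * h i\<bar> \<le> (\<Sum>i\<in>{1..n}. \<bar>e i * h i\<bar>)" by (rule sum_abs)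
  also have "\<dots> = (\<Sum>i\<in>{1..n}. h i)"
  proof (rule sum.cong)
    fix i assume i: "i \<in> {1..n}"
    then have "e i \<in> {-1,1}" using assms(1) by (auto simp: PiE_iff)
    then show "\<bar>e i * h i\<bar> = h i" using assms(2) i by (auto simp: abs_mult)
  qed simp
  finally show ?thesis .
qed

lemma main_est: fixes t :: real assumes t: "0 < t" "t \<le> 1/4"
  shows "\<bar>L (\<lambda>i. t ^ i) 6 (\<lambda>y. (1 + y) powr (13/2)) 0
           - 135135 * t ^ 21 * (1 - (t^2 + t^4 + t^6 + t^8 + t^10 + t^12) / 24)\<bar>
         \<le> 64 * t ^ 21 * ((135135/64) * (\<Sum>i\<in>{1..6::nat}. t ^ i) ^ 4)"
proof -
  define \<sigma> where "\<sigma> = (\<Sum>i\<in>{1..6::nat}. t ^ i)"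
  have \<sigma>b: "\<sigma> \<le> 3/2 * t" unfolding \<sigma>_def by (rule sigma_bound[OF t])
  have \<sigma>0: "\<sigma> \<ge> 0" unfolding \<sigma>_def using t by (intro sum_nonneg) auto
  have \<sigma>h: "\<sigma> \<le> 1/2" using \<sigma>b t by simp
  have G: "(\<lambda>y. (1 + y) powr (13/2)) = (\<lambda>y. Rd 0 y + (135135 / 61931520) * PP0 t y)"
    by (simp add: Rd0 PP0_def)
  have split: "L (\<lambda>i. t ^ i) 6 (\<lambda>y. (1 + y) powr (13/2)) 0
      = L (\<lambda>i. t ^ i) 6 (Rd 0) 0 + (135135 / 61931520) * PP6 t 0"
    unfolding G L_lin L_PP by simp
  have pp6: "(135135 / 61931520) * PP6 t 0 = 135135 * t ^ 21 * (1 - (t^2 + t^4 + t^6 + t^8 + t^10 + t^12) / 24)"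
    by (simp add: PP6_def algebra_simps power_add[symmetric])
  have bnd: "\<bar>L (\<lambda>i. t ^ i) 6 (Rd 0) 0\<bar> \<le> (\<Prod>i\<in>{1..6::nat}. 2 * t ^ i) * ((135135/64) * \<sigma> ^ 4)"
    unfolding L_def
  proof (rule diff_bound[where a="-\<sigma>" and b="\<sigma>"])
    show "\<forall>i\<in>{1..6}. 0 \<le> t ^ i" using t by simp
    show "\<forall>k<6. \<forall>y. - \<sigma> \<le> y \<and> y \<le> \<sigma> \<longrightarrow> (Rd k has_real_derivative Rd (Suc k) y) (at y)"
      using \<sigma>h by (auto intro!: Rd_deriv)
    show "\<forall>y. - \<sigma> \<le> y \<and> y \<le> \<sigma> \<longrightarrow> \<bar>Rd 6 y\<bar> \<le> 135135 / 64 * \<sigma> ^ 4"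
    proof (intro allI impI)
      fix y :: real assume y: "- \<sigma> \<le> y \<and> y \<le> \<sigma>"
      then have ay: "\<bar>y\<bar> \<le> \<sigma>" by auto
      have "\<bar>Rd 6 y\<bar> = 135135/64 * \<bar>(1 + y) powr (1/2) - (1 + y/2 - y^2/8 + y^3/16)\<bar>"
        unfolding Rd6 abs_mult by simp
      also have "\<dots> \<le> 135135/64 * y ^ 4"
        using sqrt_err[of y] ay \<sigma>h by simp
      also have "y ^ 4 \<le> \<sigma> ^ 4"
      proof -
        have "y ^ 4 = \<bar>y\<bar> ^ 4" by (simp add: power_even_abs)
        also have "\<dots> \<le> \<sigma> ^ 4" by (rule power_mono[OF ay]) simp
        finally show ?thesis .
      qed
      then have "135135/64 * y ^ 4 \<le> 135135/64 * \<sigma> ^ 4" by simp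
      finally show "\<bar>Rd 6 y\<bar> \<le> 135135 / 64 * \<sigma> ^ 4" .
    qed
    show "- \<sigma> \<le> 0 - (\<Sum>i\<in>{1..6}. t ^ i)" by (simp add: \<sigma>_def)
    show "0 + (\<Sum>i\<in>{1..6}. t ^ i) \<le> \<sigma>" by (simp add: \<sigma>_def)
  qed
  have pr: "(\<Prod>i\<in>{1..6::nat}. 2 * t ^ i) = 64 * t ^ 21"
    unfolding prod16 by (simp add: algebra_simps power_add[symmetric]) (simp add: power_Suc[symmetric] del: power_Suc)
  show ?thesis using bnd unfolding split pp6 pr \<sigma>_def[symmetric] by simp
qed


lemma phi_small: fixes t :: real assumes t: "0 < t" "t \<le> 1/2"
  shows "phi t = (1 / (135135 * t ^ 21)) *
           (\<Sum>e\<in>PiE {1..6::nat} (\<lambda>_. {-1, 1::real}).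
              (\<Prod>i\<in>{1..6}. e i) * (1 + (\<Sum>i\<in>{1..6}. e i * t ^ i)) powr (13/2))"
proof -
  have ins: "{0..6::nat} = insert 0 {1..6}" by auto
  have nin: "(0::nat) \<notin> {1..6}" by simp
  let ?P = "PiE {1..6::nat} (\<lambda>_. {-1, 1::real})"
  let ?F = "\<lambda>e. (\<Prod>i\<in>{0..6::nat}. e i) * (max (\<Sum>i\<in>{0..6}. e i * t ^ i) 0) powr (13/2)"
  have "(\<Sum>e\<in>PiE {0..6::nat} (\<lambda>_. {-1,1::real}). ?F e)
      = (\<Sum>p\<in>{-1,1::real} \<times> ?P. ?F ((\<lambda>(y, g). g(0 := y)) p))"
  proof -
    have E: "PiE {0..6::nat} (\<lambda>_. {-1,1::real}) = (\<lambda>(y, g). g(0 := y)) ` ({-1,1::real} \<times> ?P)"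
      by (simp only: ins PiE_insert_eq)
    show ?thesis unfolding E by (subst sum.reindex[OF inj_combinator[OF nin]]) (simp only: o_def)
  qed
  also have "\<dots> = (\<Sum>y\<in>{-1,1::real}. \<Sum>f\<in>?P. ?F (f(0 := y)))"
    by (subst sum.cartesian_product) (simp only: case_prod_unfold)
  also have "\<dots> = (\<Sum>f\<in>?P. (\<Prod>i\<in>{1..6}. f i) * (1 + (\<Sum>i\<in>{1..6}. f i * t ^ i)) powr (13/2))"
  proof -
    have Pr: "(\<Prod>i\<in>{0..6::nat}. (f(0 := y)) i) = y * (\<Prod>i\<in>{1..6}. f i)" for f and y :: real
      unfolding ins using nin by (simp add: prod.insert)
    have Sm: "(\<Sum>i\<in>{0..6::nat}. (f(0 := y)) i * t ^ i) = y + (\<Sum>i\<in>{1..6}. f i * t ^ i)" for f and y :: real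
      unfolding ins using nin by (simp add: sum.insert)
    have neg: "(\<Sum>f\<in>?P. ?F (f(0 := -1))) = 0"
    proof (rule sum.neutral, rule ballI)
      fix f assume f: "f \<in> ?P"
      have "\<bar>\<Sum>i\<in>{1..6}. f i * t ^ i\<bar> \<le> (\<Sum>i\<in>{1..6::nat}. t ^ i)"
        by (rule abs_sum_sign[OF f]) (use t in simp)
      with sigma_half[OF t] have "-1 + (\<Sum>i\<in>{1..6}. f i * t ^ i) < 0" by linarith
      then show "?F (f(0 := -1)) = 0" unfolding Sm by simp
    qed
    have pos: "?F (f(0 := 1)) = (\<Prod>i\<in>{1..6}. f i) * (1 + (\<Sum>i\<in>{1..6}. f i * t ^ i)) powr (13/2)"
      if f: "f \<in> ?P" for f
    proof -
      have "\<bar>\<Sum>i\<in>{1..6}. f i * t ^ i\<bar> \<le> (\<Sum>i\<in>{1..6::nat}. t ^ i)"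
        by (rule abs_sum_sign[OF f]) (use t in simp)
      with sigma_half[OF t] have "1 + (\<Sum>i\<in>{1..6}. f i * t ^ i) > 0" by linarith
      then show ?thesis unfolding Sm Pr by simp
    qed
    show ?thesis using neg pos by simp
  qed
  finally show ?thesis unfolding phi_def by simp
qed


lemma sum07: "(\<Sum>i\<in>{0..6::nat}. f i) = f 0 + f 1 + f 2 + f 3 + f 4 + f 5 + (f 6 :: real)"
proof -
  have "{0..6::nat} = {0,1,2,3,4,5,6}" by auto
  then show ?thesis by simp
qed

lemma prod07: "(\<Prod>i\<in>{0..6::nat}. f i) = f 0 * f 1 * f 2 * f 3 * f 4 * f 5 * (f 6 :: real)"
proof -
  have "{0..6::nat} = {0,1,2,3,4,5,6}" by auto
  then show ?thesis by (simp add: mult.assoc)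
qed

lemma t39: fixes t :: real assumes "0 < t" shows "(t ^ 6) powr (13/2) = t ^ 39"
proof -
  have "(t ^ 6) powr (13/2) = (t powr 6) powr (13/2)" using assms by simp
  also have "\<dots> = t powr 39" by (simp add: powr_powr)
  also have "\<dots> = t ^ 39" using assms by simp
  finally show ?thesis .
qed

lemma phi_sym: fixes t :: real assumes t: "0 < t" shows "phi (1 / t) = t ^ 3 * phi t"
proof -
  let ?P = "PiE {0..6::nat} (\<lambda>_. {-1, 1::real})"
  define F where "F s e = (\<Prod>i\<in>{0..6::nat}. e i) * (max (\<Sum>i\<in>{0..6}. e i * s ^ i) 0) powr (13/2)" for s :: real and e :: "nat \<Rightarrow> real"
  define r where "r e = (\<lambda>i::nat. if i \<le> 6 then e (6 - i) else undefined)" for e :: "nat \<Rightarrow> real"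
  have phiF: "phi s = (1 / (135135 * s ^ 21)) * (\<Sum>e\<in>?P. F s e)" for s
    by (simp add: phi_def F_def)
  have rr: "r (r e) = e" if "e \<in> ?P" for e
  proof
    fix i show "r (r e) i = e i" using that by (cases "i \<le> 6") (auto simp: r_def PiE_iff extensional_def)
  qed
  have rP: "r e \<in> ?P" if "e \<in> ?P" for e
    using that by (auto simp: r_def PiE_iff extensional_def)
  have key: "F (1/t) e = F t (r e) / t ^ 39" for e
  proof -
    have X: "(\<Sum>i\<in>{0..6::nat}. e i * (1/t) ^ i) = (\<Sum>i\<in>{0..6::nat}. r e i * t ^ i) / t ^ 6"
      unfolding sum07 r_def using t by (simp add: field_simps power_divide) algebra
    have Pr: "(\<Prod>i\<in>{0..6::nat}. e i) = (\<Prod>i\<in>{0..6::nat}. r e i)"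
      unfolding prod07 r_def by (simp add: ac_simps)
    have M: "max (A / t ^ 6) 0 = max A 0 / t ^ 6" for A
      using t by (auto simp: max_def divide_le_0_iff)
    have "(max (\<Sum>i\<in>{0..6::nat}. e i * (1/t) ^ i) 0) powr (13/2)
        = (max (\<Sum>i\<in>{0..6::nat}. r e i * t ^ i) 0) powr (13/2) / t ^ 39"
      unfolding X M powr_divide t39[OF t] ..
    then show ?thesis unfolding F_def Pr by simp
  qed
  have "(\<Sum>e\<in>?P. F (1/t) e) = (\<Sum>e\<in>?P. F t (r e)) / t ^ 39"
    unfolding key by (simp add: sum_divide_distrib)
  also have "(\<Sum>e\<in>?P. F t (r e)) = (\<Sum>e\<in>?P. F t e)"
    by (rule sum.reindex_bij_witness[where i=r and j=r]) (auto simp: rr rP)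
  finally have S: "(\<Sum>e\<in>?P. F (1/t) e) = (\<Sum>e\<in>?P. F t e) / t ^ 39" .
  show ?thesis unfolding phiF S using t by (simp add: field_simps power_one_over)
qed


lemma phi_est: fixes t :: real assumes t: "0 < t" "t \<le> 1/4"
  shows "\<bar>phi t - (1 - t ^ 2 / 24)\<bar> \<le> 7 * t ^ 4"
proof -
  define \<sigma> where "\<sigma> = (\<Sum>i\<in>{1..6::nat}. t ^ i)"
  define A where "A = L (\<lambda>i. t ^ i) 6 (\<lambda>y. (1 + y) powr (13/2)) 0"
  define Q where "Q = t^2 + t^4 + t^6 + t^8 + t^10 + t^12"
  have \<sigma>b: "\<sigma> \<le> 3/2 * t" unfolding \<sigma>_def by (rule sigma_bound[OF t])
  have \<sigma>0: "\<sigma> \<ge> 0" unfolding \<sigma>_def using t by (intro sum_nonneg) auto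
  have ph: "phi t = A / (135135 * t ^ 21)"
    using phi_small[of t] t unfolding A_def L_def by simp
  have est: "\<bar>A - 135135 * t ^ 21 * (1 - Q / 24)\<bar> \<le> 135135 * t ^ 21 * \<sigma> ^ 4"
    using main_est[OF t] unfolding A_def Q_def \<sigma>_def by simp
  have tp: "t ^ 21 > 0" using t by simp
  have eq: "phi t - (1 - Q / 24) = (A - 135135 * t ^ 21 * (1 - Q / 24)) / (135135 * t ^ 21)"
    unfolding ph using tp by (simp add: field_simps)
  have d: "\<bar>phi t - (1 - Q / 24)\<bar> = \<bar>A - 135135 * t ^ 21 * (1 - Q / 24)\<bar> / (135135 * t ^ 21)"
    unfolding eq abs_divide using tp by simp
  have e1: "\<bar>phi t - (1 - Q / 24)\<bar> \<le> \<sigma> ^ 4"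
  proof -
    have gen: "X / c \<le> s" if "0 < c" "X \<le> s * c" for X c s :: real
      using that by (simp add: pos_divide_le_eq)
    have "135135 * t ^ 21 * \<sigma> ^ 4 = \<sigma> ^ 4 * (135135 * t ^ 21)" by (rule mult.commute)
    then have est': "\<bar>A - 135135 * t ^ 21 * (1 - Q / 24)\<bar> \<le> \<sigma> ^ 4 * (135135 * t ^ 21)" using est by (metis mult.commute)
    show ?thesis unfolding d using est' tp by (intro gen) simp_all
  qed
  have "\<sigma> ^ 4 \<le> (3/2 * t) ^ 4" by (rule power_mono[OF \<sigma>b \<sigma>0])
  also have "\<dots> = 81/16 * t ^ 4" by (simp add: power_mult_distrib power_divide)
  also have "\<dots> \<le> 6 * t ^ 4" using t by simp
  finally have e2: "\<sigma> ^ 4 \<le> 6 * t ^ 4" .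
  have c: "t ^ k \<le> t ^ 4" if "4 \<le> k" for k by (rule power_decreasing[OF that]) (use t in auto)
  have e3: "\<bar>Q / 24 - t ^ 2 / 24\<bar> \<le> t ^ 4"
  proof -
    have c6: "t^6 \<le> t^4" and c8: "t^8 \<le> t^4" and c10: "t^10 \<le> t^4" and c12: "t^12 \<le> t^4"
      by (rule c; simp)+
    have n: "t^4 \<ge> 0" "t^6 \<ge> 0" "t^8 \<ge> 0" "t^10 \<ge> 0" "t^12 \<ge> 0" using t by simp_all
    have qe: "Q / 24 - t ^ 2 / 24 = (t^4 + t^6 + t^8 + t^10 + t^12) / 24" unfolding Q_def by (simp add: field_simps)
    have "\<bar>(t^4 + t^6 + t^8 + t^10 + t^12) / 24\<bar> \<le> t ^ 4"
      using c6 c8 c10 c12 n by (simp; use n in linarith)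
    then show ?thesis unfolding qe .
  qed
  show ?thesis using e1 e2 e3 by linarith
qed


lemma ev_est: "eventually (\<lambda>t::real. \<bar>phi t - (1 - t ^ 2 / 24)\<bar> \<le> 7 * t ^ 4) (at_right 0)"
  unfolding eventually_at_right_field
  by (rule exI[of _ "1/4"]) (auto intro!: phi_est)

theorem mainTheorem3:
  shows "(\<forall>t::real. t > 0 \<longrightarrow> phi (1 / t) = t ^ 3 * phi t)
    \<and> (phi \<longlongrightarrow> 1) (at_right 0)
    \<and> (\<forall>t::real. 0 < t \<and> t \<le> 1/2 \<longrightarrow>
         phi t = (1 / (135135 * t ^ 21)) *
           (\<Sum>e\<in>PiE {1..6::nat} (\<lambda>_. {-1, 1::real}).
              (\<Prod>i\<in>{1..6}. e i) * (1 + (\<Sum>i\<in>{1..6}. e i * t ^ i)) powr (13/2)))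
    \<and> (\<lambda>t. phi t - (1 - t ^ 2 / 24)) \<in> O[at_right (0::real)](\<lambda>t. t ^ 4)"
proof (intro conjI)
  show "\<forall>t::real. t > 0 \<longrightarrow> phi (1 / t) = t ^ 3 * phi t" using phi_sym by blast
  show "\<forall>t::real. 0 < t \<and> t \<le> 1/2 \<longrightarrow>
         phi t = (1 / (135135 * t ^ 21)) *
           (\<Sum>e\<in>PiE {1..6::nat} (\<lambda>_. {-1, 1::real}).
              (\<Prod>i\<in>{1..6}. e i) * (1 + (\<Sum>i\<in>{1..6}. e i * t ^ i)) powr (13/2))"
    using phi_small by blast
  show "(\<lambda>t. phi t - (1 - t ^ 2 / 24)) \<in> O[at_right (0::real)](\<lambda>t. t ^ 4)"
  proof (rule bigoI[where c=7])
    show "eventually (\<lambda>t. norm (phi t - (1 - t ^ 2 / 24)) \<le> 7 * norm (t ^ 4)) (at_right (0::real))"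
      using ev_est by eventually_elim (simp add: abs_mult)
  qed
  show "(phi \<longlongrightarrow> 1) (at_right 0)"
  proof (rule LIM_zero_cancel, rule Lim_null_comparison)
    show "eventually (\<lambda>t. norm (phi t - 1) \<le> t ^ 2 / 24 + 7 * t ^ 4) (at_right (0::real))"
      using ev_est
    proof eventually_elim
      case (elim t)
      have "0 \<le> t ^ 2" by simp
      with elim show ?case unfolding real_norm_def abs_le_iff by linarith
    qed
    have "((\<lambda>t::real. t ^ 2 / 24 + 7 * t ^ 4) \<longlongrightarrow> 0 ^ 2 / 24 + 7 * 0 ^ 4) (at_right 0)"
      by (intro tendsto_intros) simp_all
    then show "((\<lambda>t::real. t ^ 2 / 24 + 7 * t ^ 4) \<longlongrightarrow> 0) (at_right 0)" by simp
  qed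
qed

end
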